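(* Let $(S,\gamma)$ be a $C^\infty$ surface with boundary in $\mathbf{R}^3$ and $\widetilde S$ a flat $C^1$ extension of $S$. Suppose that the restriction $g|_\gamma$ of the Gauss mapping $g$ of $S$ to $\gamma$ is an immersion. Then for any $p\in\gamma$ there is an open neighbourhood $U$ of $p$ in $\widetilde S\setminus\mathrm{Int}\,S$ such that the Legendre lifting of $U$ projects by $\pi_2$ into the dual-boundary $\widehat\gamma$.
   Context: $S$ is a co-oriented immersed $C^\infty$ surface with boundary curve $\gamma(t)$, unit normal $\boldsymbol n$, Gauss mapping $g:S\to S^2$, $g(x)=\boldsymbol n(x)$. A flat $C^1$ extension of $S$ is a $C^1$ surface $\widetilde S\supset S$ such that $\widetilde S\setminus\mathrm{Int}\,S$ is $C^\infty$ with identically vanishing Gaussian curvature. Let $T_1\mathbf{R}^3=\{(x,v): x\in\mathbf{R}^3, v\in S^2\}$ with contact structure $\{v\cdot dx=0\}$, $\pi_1(x,v)=x$, and $\pi_2:T_1\mathbf{R}^3\to\mathbf{R}\times S^2$, $\pi_2(x,v)=(-x\cdot v,v)$. The Legendre lifting of a co-oriented surface piece $U\subset\widetilde S$ is $\{(x,\boldsymbol n(x)): x\in U\}$, $\boldsymbol n$ the (continuous) unit normal of $\widetilde S$ extending that of $S$. The dual-boundary is $\widehat\gamma=\{(-\gamma(t)\cdot\boldsymbol n(\gamma(t)),\boldsymbol n(\gamma(t)))\}\subset\mathbf{R}\times S^2$. *)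

theory Defs
  imports "HOL-Analysis.Analysis"
begin

text \<open>k-times continuously differentiable maps on an open set of a finite-dimensional
space: C^0 = continuous; C^(k+1) = differentiable and every directional derivative
x \<mapsto> Df(x)v is C^k. (For finite-dimensional domains this is the usual C^k.)\<close>
fun Ck :: "nat \<Rightarrow> 'a::euclidean_space set \<Rightarrow> ('a \<Rightarrow> 'b::real_normed_vector) \<Rightarrow> bool" where
  "Ck 0 S f = continuous_on S f"
| "Ck (Suc k) S f = (f differentiable_on S \<and>
      (\<forall>v. Ck k S (\<lambda>x. frechet_derivative f (at x) v)))"

definition smooth_on :: "'a::euclidean_space set \<Rightarrow> ('a \<Rightarrow> 'b::real_normed_vector) \<Rightarrow> bool" where
  "smooth_on S f \<longleftrightarrow> (\<forall>k. Ck k S f)"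

definition pd_u :: "(real^2 \<Rightarrow> real^3) \<Rightarrow> real^2 \<Rightarrow> real^3" where
  "pd_u X w = frechet_derivative X (at w) (axis 1 1)"
definition pd_v :: "(real^2 \<Rightarrow> real^3) \<Rightarrow> real^2 \<Rightarrow> real^3" where
  "pd_v X w = frechet_derivative X (at w) (axis 2 1)"

definition gauss_curv :: "(real^2 \<Rightarrow> real^3) \<Rightarrow> real^2 \<Rightarrow> real" where
  "gauss_curv X w =
    (let Xu = pd_u X w; Xv = pd_v X w;
         Xuu = pd_u (pd_u X) w; Xuv = pd_v (pd_u X) w; Xvv = pd_v (pd_v X) w;
         n = (1 / norm (cross3 Xu Xv)) *\<^sub>R (cross3 Xu Xv);
         E = Xu \<bullet> Xu; F = Xu \<bullet> Xv; G = Xv \<bullet> Xv;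
         L = Xuu \<bullet> n; M = Xuv \<bullet> n; N = Xvv \<bullet> n
     in (L * N - M\<^sup>2) / (E * G - F\<^sup>2))"

definition bpt :: "real \<Rightarrow> real^2" where
  "bpt t = vector [t, 0]"

text \<open>pi_2 : T_1 R^3 \<rightarrow> R x S^2, (x,v) \<mapsto> (-x.v, v).\<close>
definition pi2 :: "(real^3) \<times> (real^3) \<Rightarrow> real \<times> (real^3)" where
  "pi2 xv = (- (fst xv \<bullet> snd xv), snd xv)"

definition legendre_lift :: "(real^2 \<Rightarrow> real^3) \<Rightarrow> (real^2 \<Rightarrow> real^3) \<Rightarrow> (real^2) set
     \<Rightarrow> ((real^3) \<times> (real^3)) set" where
  "legendre_lift X N V = (\<lambda>w. (X w, N w)) ` V"

definition dual_boundary :: "(real^2 \<Rightarrow> real^3) \<Rightarrow> (real^2 \<Rightarrow> real^3) \<Rightarrow> real set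
     \<Rightarrow> (real \<times> (real^3)) set" where
  "dual_boundary X N T = (\<lambda>t. (- (X (bpt t) \<bullet> N (bpt t)), N (bpt t))) ` T"

end

theory Submission
  imports Defs
begin

unbundle cross3_syntax


lemma deriv_line:
  fixes f :: "'a::euclidean_space \<Rightarrow> 'b::real_inner"
  assumes "f differentiable at (y + s *\<^sub>R v)"
  shows "((\<lambda>s. c \<bullet> f (y + s *\<^sub>R v)) has_real_derivative (c \<bullet> frechet_derivative f (at (y + s *\<^sub>R v)) v)) (at s)"
proof -
  have lin: "linear (frechet_derivative f (at (y + s *\<^sub>R v)))"
    using assms frechet_derivative_works has_derivative_linear by blast
  have d1: "((\<lambda>s. y + s *\<^sub>R v) has_derivative (\<lambda>h. h *\<^sub>R v)) (at s)"
    by (auto intro!: derivative_eq_intros)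
  have d2: "(f has_derivative frechet_derivative f (at (y + s *\<^sub>R v))) (at (y + s *\<^sub>R v))"
    using assms frechet_derivative_works by blast
  have "((\<lambda>s. f (y + s *\<^sub>R v)) has_derivative (\<lambda>h. frechet_derivative f (at (y + s *\<^sub>R v)) (h *\<^sub>R v))) (at s)"
    using has_derivative_compose[OF d1 d2] by (simp add: o_def)
  then have "((\<lambda>s. c \<bullet> f (y + s *\<^sub>R v)) has_derivative (\<lambda>h. c \<bullet> frechet_derivative f (at (y + s *\<^sub>R v)) (h *\<^sub>R v))) (at s)"
    by (auto intro!: derivative_eq_intros)
  then show ?thesis
    unfolding has_field_derivative_def
    by (rule has_derivative_eq_rhs) (auto simp: linear_scale[OF lin] algebra_simps)
qed




lemma mvt2d:
  fixes f :: "'a::euclidean_space \<Rightarrow> 'b::real_inner"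
  assumes df: "\<And>y. y\<in> U \<Longrightarrow> f differentiable at y"
   and dd: "\<And>y. y\<in> U \<Longrightarrow> (\<lambda>y. frechet_derivative f (at y) v) differentiable at y"
   and sub: "\<And>s \<tau>. 0 \<le> s \<Longrightarrow> s \<le> t \<Longrightarrow> 0 \<le> \<tau> \<Longrightarrow> \<tau> \<le> t \<Longrightarrow> x + s *\<^sub>R v + \<tau> *\<^sub>R w \<in> U"
   and t: "0 < t"
  shows "\<exists>\<xi> \<eta>. 0 < \<xi> \<and> \<xi> < t \<and> 0 < \<eta> \<and> \<eta> < t \<and>
     c \<bullet> (f (x + t *\<^sub>R v + t *\<^sub>R w) - f (x + t *\<^sub>R v) - f (x + t *\<^sub>R w) + f x) =
     t * t * (c \<bullet> frechet_derivative (\<lambda>y. frechet_derivative f (at y) v) (at (x + \<xi> *\<^sub>R v + \<eta> *\<^sub>R w)) w)"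
proof -
  define g where "g = (\<lambda>y. frechet_derivative f (at y) v)"
  define \<phi> where "\<phi> = (\<lambda>s. c \<bullet> f ((x + t *\<^sub>R w) + s *\<^sub>R v) - c \<bullet> f (x + s *\<^sub>R v))"
  have "(\<phi> has_real_derivative
      (c \<bullet> g ((x + t *\<^sub>R w) + s *\<^sub>R v) - c \<bullet> g (x + s *\<^sub>R v))) (at s)"
    if s0: "0 \<le> s" "s \<le> t" for s
  proof -
    have s: "0 \<le> s \<and> s \<le> t" using s0 by simp
    have i1: "(x + t *\<^sub>R w) + s *\<^sub>R v \<in> U" using sub[of s t] s t by (simp add: algebra_simps)
    have i2: "x + s *\<^sub>R v \<in> U" using sub[of s 0] s t by simp
    show "(\<phi> has_real_derivative (c \<bullet> g ((x + t *\<^sub>R w) + s *\<^sub>R v) - c \<bullet> g (x + s *\<^sub>R v))) (at s)"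
      unfolding \<phi>_def g_def
      by (intro derivative_intros deriv_line df i1 i2)
  qed
  from MVT2[OF t this] obtain \<xi> where \<xi>: "0 < \<xi>" "\<xi> < t"
    and e1: "\<phi> t - \<phi> 0 = (t - 0) * (c \<bullet> g ((x + t *\<^sub>R w) + \<xi> *\<^sub>R v) - c \<bullet> g (x + \<xi> *\<^sub>R v))"
    by auto
  define \<psi> where "\<psi> = (\<lambda>\<tau>. c \<bullet> g ((x + \<xi> *\<^sub>R v) + \<tau> *\<^sub>R w))"
  have "(\<psi> has_real_derivative
      (c \<bullet> frechet_derivative g (at ((x + \<xi> *\<^sub>R v) + \<tau> *\<^sub>R w)) w)) (at \<tau>)"
    if t0: "0 \<le> \<tau>" "\<tau> \<le> t" for \<tau>
  proof -
    have \<tau>: "0 \<le> \<tau> \<and> \<tau> \<le> t" using t0 by simp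
    have i1: "(x + \<xi> *\<^sub>R v) + \<tau> *\<^sub>R w \<in> U" using sub[of \<xi> \<tau>] \<tau> \<xi> by simp
    show "(\<psi> has_real_derivative (c \<bullet> frechet_derivative g (at ((x + \<xi> *\<^sub>R v) + \<tau> *\<^sub>R w)) w)) (at \<tau>)"
      unfolding \<psi>_def
      by (intro deriv_line) (use dd i1 g_def in auto)
  qed
  from MVT2[OF t this] obtain \<eta> where \<eta>: "0 < \<eta>" "\<eta> < t"
    and e2: "\<psi> t - \<psi> 0 = (t - 0) * (c \<bullet> frechet_derivative g (at ((x + \<xi> *\<^sub>R v) + \<eta> *\<^sub>R w)) w)"
    by auto
  have "c \<bullet> (f (x + t *\<^sub>R v + t *\<^sub>R w) - f (x + t *\<^sub>R v) - f (x + t *\<^sub>R w) + f x) = \<phi> t - \<phi> 0"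
    unfolding \<phi>_def by (simp add: algebra_simps inner_diff_right inner_add_right)
  also have "\<dots> = t * (\<psi> t - \<psi> 0)"
    unfolding e1 \<psi>_def by (simp add: algebra_simps)
  also have "\<dots> = t * t * (c \<bullet> frechet_derivative g (at (x + \<xi> *\<^sub>R v + \<eta> *\<^sub>R w)) w)"
    unfolding e2 by simp
  finally show ?thesis using \<xi> \<eta> g_def by blast
qed




lemma norm_le_two_param:
  fixes v w :: "'a::real_normed_vector"
  assumes "norm v = 1" "norm w = 1" "0 \<le> s" "0 \<le> \<tau>"
  shows "norm (s *\<^sub>R v + \<tau> *\<^sub>R w) \<le> s + \<tau>"
  using norm_triangle_ineq[of "s *\<^sub>R v" "\<tau> *\<^sub>R w"] assms by simp

lemma schwarz:
  fixes f :: "real^2 \<Rightarrow> real^3"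
  assumes U: "open U" and df: "\<And>y. y\<in>U \<Longrightarrow> f differentiable at y"
   and du: "\<And>y. y\<in>U \<Longrightarrow> pd_u f differentiable at y"
   and dv: "\<And>y. y\<in>U \<Longrightarrow> pd_v f differentiable at y"
   and cuv: "continuous_on U (pd_v (pd_u f))" and cvu: "continuous_on U (pd_u (pd_v f))"
   and x: "x \<in> U"
  shows "pd_v (pd_u f) x = pd_u (pd_v f) x"
proof -
  define e1 :: "real^2" where "e1 = axis 1 1"
  define e2 :: "real^2" where "e2 = axis 2 1"
  have pu: "pd_u f = (\<lambda>y. frechet_derivative f (at y) e1)" by (auto simp: pd_u_def e1_def)
  have pv: "pd_v f = (\<lambda>y. frechet_derivative f (at y) e2)" by (auto simp: pd_v_def e2_def)
  have n1: "norm e1 = 1" and n2: "norm e2 = 1" by (auto simp: e1_def e2_def)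
  define A where "A = pd_v (pd_u f) x"
  define B where "B = pd_u (pd_v f) x"
  define c where "c = A - B"
  have key: "norm c \<le> 2 * \<epsilon>" if e: "\<epsilon> > 0" for \<epsilon>
  proof -
    obtain d1 where d1: "d1 > 0" "\<And>y. y \<in> U \<Longrightarrow> dist y x < d1 \<Longrightarrow> dist (pd_v (pd_u f) y) A < \<epsilon>"
      using cuv x e unfolding continuous_on_iff A_def by metis
    obtain d2 where d2: "d2 > 0" "\<And>y. y \<in> U \<Longrightarrow> dist y x < d2 \<Longrightarrow> dist (pd_u (pd_v f) y) B < \<epsilon>"
      using cvu x e unfolding continuous_on_iff B_def by metis
    obtain d3 where d3: "d3 > 0" "ball x d3 \<subseteq> U"
      using U x open_contains_ball by blast
    define d where "d = min d1 (min d2 d3)"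
    define t where "t = d / 3"
    have t: "t > 0" using d1 d2 d3 by (simp add: t_def d_def)
    have inb: "dist (x + s *\<^sub>R v + \<tau> *\<^sub>R w) x < d" 
      if "norm v = 1" "norm w = 1" "0 \<le> s" "s \<le> t" "0 \<le> \<tau>" "\<tau> \<le> t" for s \<tau> and v w :: "real^2"
    proof -
      have "dist (x + s *\<^sub>R v + \<tau> *\<^sub>R w) x = norm (s *\<^sub>R v + \<tau> *\<^sub>R w)"
        by (simp add: dist_norm algebra_simps)
      also have "\<dots> \<le> s + \<tau>" using norm_le_two_param that by blast
      also have "\<dots> < d" using that t unfolding t_def by simp
      finally show ?thesis .
    qed
    have inU: "x + s *\<^sub>R v + \<tau> *\<^sub>R w \<in> U"
      if "norm v = 1" "norm w = 1" "0 \<le> s" "s \<le> t" "0 \<le> \<tau>" "\<tau> \<le> t" for s \<tau> and v w :: "real^2"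
      using inb[OF that] d3 unfolding d_def by (auto simp: dist_commute)
    obtain \<xi> \<eta> where xe: "0 < \<xi>" "\<xi> < t" "0 < \<eta>" "\<eta> < t"
      and m1: "c \<bullet> (f (x + t *\<^sub>R e1 + t *\<^sub>R e2) - f (x + t *\<^sub>R e1) - f (x + t *\<^sub>R e2) + f x) =
       t * t * (c \<bullet> frechet_derivative (\<lambda>y. frechet_derivative f (at y) e1) (at (x + \<xi> *\<^sub>R e1 + \<eta> *\<^sub>R e2)) e2)"
      using mvt2d[of U f e1 t x e2 c] df du pu inU n1 n2 t by auto
    obtain \<xi>' \<eta>' where xe': "0 < \<xi>'" "\<xi>' < t" "0 < \<eta>'" "\<eta>' < t"
      and m2: "c \<bullet> (f (x + t *\<^sub>R e2 + t *\<^sub>R e1) - f (x + t *\<^sub>R e2) - f (x + t *\<^sub>R e1) + f x) =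
       t * t * (c \<bullet> frechet_derivative (\<lambda>y. frechet_derivative f (at y) e2) (at (x + \<xi>' *\<^sub>R e2 + \<eta>' *\<^sub>R e1)) e1)"
      using mvt2d[of U f e2 t x e1 c] df dv pv inU n1 n2 t by auto
    define P1 where "P1 = x + \<xi> *\<^sub>R e1 + \<eta> *\<^sub>R e2"
    define P2 where "P2 = x + \<xi>' *\<^sub>R e2 + \<eta>' *\<^sub>R e1"
    have eqd: "c \<bullet> pd_v (pd_u f) P1 = c \<bullet> pd_u (pd_v f) P2"
    proof -
      have "t * t * (c \<bullet> pd_v (pd_u f) P1) = t * t * (c \<bullet> pd_u (pd_v f) P2)"
        using m1 m2 unfolding P1_def P2_def pu pv
        by (simp add: pd_u_def pd_v_def e1_def e2_def algebra_simps)
      then show ?thesis using t by simp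
    qed
    have P1U: "P1 \<in> U" and P1d: "dist P1 x < d" using inU inb n1 n2 xe unfolding P1_def by auto
    have P2U: "P2 \<in> U" and P2d: "dist P2 x < d" using inU inb n1 n2 xe' unfolding P2_def by auto
    have a1: "norm (A - pd_v (pd_u f) P1) < \<epsilon>"
      using d1(2)[OF P1U] P1d unfolding d_def by (simp add: dist_norm norm_minus_commute)
    have a2: "norm (pd_u (pd_v f) P2 - B) < \<epsilon>"
      using d2(2)[OF P2U] P2d unfolding d_def by (simp add: dist_norm)
    have "c \<bullet> c = c \<bullet> (A - pd_v (pd_u f) P1) + c \<bullet> (pd_u (pd_v f) P2 - B)"
      using eqd unfolding c_def by (simp add: inner_diff_right algebra_simps)
    also have "\<dots> \<le> norm c * norm (A - pd_v (pd_u f) P1) + norm c * norm (pd_u (pd_v f) P2 - B)"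
      by (intro add_mono norm_cauchy_schwarz)
    also have "\<dots> \<le> norm c * \<epsilon> + norm c * \<epsilon>"
      using a1 a2 by (intro add_mono mult_left_mono) auto
    finally have "norm c * norm c \<le> norm c * (2 * \<epsilon>)"
      by (simp add: dot_square_norm power2_eq_square[symmetric] algebra_simps)
    then show ?thesis
      by (cases "norm c = 0") (use e in auto)
  qed
  have "norm c = 0"
  proof (rule ccontr)
    assume "norm c \<noteq> 0"
    then have "norm c > 0" by simp
    with key[of "norm c / 4"] show False by simp
  qed
  then show ?thesis unfolding c_def A_def B_def by simp
qed




lemma binet: "(p \<times> q) \<bullet> (a \<times> b) = (p \<bullet> a) * (q \<bullet> b) - (p \<bullet> b) * (q \<bullet> a)" for p q a b :: "real^3"
  unfolding cross3_def inner_vec_def sum_3 by (simp add: vector_def) algebra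
lemma triple: "(p \<times> q) \<times> c = (p \<bullet> c) *\<^sub>R q - (q \<bullet> c) *\<^sub>R p" for p q c :: "real^3"
  unfolding cross3_def inner_vec_def sum_3 by (simp add: vec_eq_iff vector_def forall_3) algebra



lemma rank_lemma:
  fixes p q a b :: "real^3"
  assumes "p \<bullet> (a \<times> b) = 0" "q \<bullet> (a \<times> b) = 0" "a \<times> b \<noteq> 0"
    "(p \<bullet> a) * (q \<bullet> b) - (p \<bullet> b) * (q \<bullet> a) = 0"
  shows "p \<times> q = 0"
proof -
  let ?c = "a \<times> b"
  have 1: "(p \<times> q) \<bullet> ?c = 0" using binet assms(4) by simp
  have 2: "(p \<times> q) \<times> ?c = 0" using triple[of p q ?c] assms(1,2) by simp
  have "(norm ((p \<times> q) \<times> ?c))\<^sup>2 + ((p \<times> q) \<bullet> ?c)\<^sup>2 = (norm (p \<times> q) * norm ?c)\<^sup>2"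
    by (rule norm_cross_dot)
  then have "norm (p \<times> q) * norm ?c = 0" using 1 2 by simp
  then show ?thesis using assms(3) by simp
qed




lemma unit_normal_pm:
  fixes N a b :: "real^3"
  assumes "N \<bullet> a = 0" "N \<bullet> b = 0" "norm N = 1" "a \<times> b \<noteq> 0"
  defines "n \<equiv> (1 / norm (a \<times> b)) *\<^sub>R (a \<times> b)"
  shows "(N \<bullet> n)\<^sup>2 = 1" "N = (N \<bullet> n) *\<^sub>R n"
proof -
  have nn: "norm n = 1" using assms(4) unfolding n_def by simp
  have "N \<times> (a \<times> b) = 0"
    using assms(1,2) triple[of a b N] cross_skew[of N "a \<times> b"] by (simp add: inner_commute)
  then have "N \<times> n = 0" unfolding n_def by (simp add: cross_mult_right)
  then have "(N \<bullet> n)\<^sup>2 = (norm N * norm n)\<^sup>2" using norm_cross_dot[of N n] by simp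
  then show sq: "(N \<bullet> n)\<^sup>2 = 1" using nn assms(3) by simp
  have "(norm (N - (N \<bullet> n) *\<^sub>R n))\<^sup>2 = (N - (N \<bullet> n) *\<^sub>R n) \<bullet> (N - (N \<bullet> n) *\<^sub>R n)"
    by (simp add: power2_norm_eq_inner)
  also have "\<dots> = N \<bullet> N - 2 * (N \<bullet> n)\<^sup>2 + (N \<bullet> n)\<^sup>2 * (n \<bullet> n)"
    by (simp add: inner_diff_left inner_diff_right power2_eq_square inner_commute algebra_simps)
  also have "\<dots> = 0" using sq nn assms(3) by (simp add: dot_square_norm) 
  finally show "N = (N \<bullet> n) *\<^sub>R n" by simp
qed





lemma cross_zero_collinear:
  fixes a b :: "real^3"
  assumes "a \<times> b = 0" "a \<noteq> 0"
  shows "\<exists>l. b = l *\<^sub>R a"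
proof -
  have "collinear {0, a, b}" using assms(1) cross_eq_0 by blast
  then have "a = 0 \<or> b = 0 \<or> (\<exists>c. b = c *\<^sub>R a)" by (simp only: collinear_lemma)
  then show ?thesis using assms(2) by (metis scale_zero_left)
qed

lemma inj_linear_cross:
  fixes L :: "real^2 \<Rightarrow> real^3"
  assumes "linear L" "inj L"
  shows "L (axis 1 1) \<times> L (axis 2 1) \<noteq> 0"
proof
  assume h: "L (axis 1 1) \<times> L (axis 2 1) = 0"
  have a0: "L (axis 1 1) \<noteq> 0"
  proof
    assume "L (axis 1 1) = 0"
    then have "L (axis 1 1) = L 0" using linear_0[OF assms(1)] by simp
    then have "(axis 1 1 :: real^2) = 0" using assms(2) by (simp add: inj_eq)
    then show False by (simp add: axis_eq_0_iff)
  qed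
  obtain l where "L (axis 2 1) = l *\<^sub>R L (axis 1 1)" using cross_zero_collinear[OF h a0] by blast
  then have "L (axis 2 1) = L (l *\<^sub>R axis 1 1)" using assms(1) by (simp add: linear_scale)
  then have "axis 2 1 = (l *\<^sub>R axis 1 1 :: real^2)" using assms(2) by (simp add: inj_eq)
  then have "(axis 2 1 :: real^2) $ 2 = (l *\<^sub>R axis 1 1 :: real^2) $ 2" by simp
  then show False by (simp add: axis_def)
qed





lemma bb_cross: "bounded_bilinear cross3"
  using bilinear_conv_bounded_bilinear bilinear_cross by blast

lemma n_deriv:
  fixes a b :: "real^2 \<Rightarrow> real^3"
  assumes da: "(a has_derivative Da) (at x)" and db: "(b has_derivative Db) (at x)"
    and c0: "a x \<times> b x \<noteq> 0"
  shows "((\<lambda>y. inverse (norm (a y \<times> b y)) *\<^sub>R (a y \<times> b y)) has_derivative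
      (\<lambda>h. inverse (norm (a x \<times> b x)) *\<^sub>R (Da h \<times> b x + a x \<times> Db h)
        - (((a x \<times> b x) \<bullet> (Da h \<times> b x + a x \<times> Db h)) / norm (a x \<times> b x) ^ 3) *\<^sub>R (a x \<times> b x))) (at x)"
proof -
  define c where "c = (\<lambda>y. a y \<times> b y)"
  define Dc where "Dc = (\<lambda>h. a x \<times> Db h + Da h \<times> b x)"
  have dc: "(c has_derivative Dc) (at x)"
    unfolding c_def Dc_def by (rule bounded_bilinear.FDERIV[OF bb_cross da db])
  have dn: "((\<lambda>y. norm (c y)) has_derivative (\<lambda>h. Dc h \<bullet> sgn (c x))) (at x)"
    using has_derivative_compose[OF dc has_derivative_norm[of "c x"]] c0 unfolding c_def by (simp add: o_def)
  have c0': "norm (c x) \<noteq> 0" using c0 unfolding c_def by simp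
  have di: "((\<lambda>y. inverse (norm (c y))) has_derivative
     (\<lambda>h. - (inverse (norm (c x)) * (Dc h \<bullet> sgn (c x)) * inverse (norm (c x))))) (at x)"
    by (rule Deriv.has_derivative_inverse[OF c0' dn])
  have "((\<lambda>y. inverse (norm (c y)) *\<^sub>R c y) has_derivative
     (\<lambda>h. inverse (norm (c x)) *\<^sub>R Dc h + (- (inverse (norm (c x)) * (Dc h \<bullet> sgn (c x)) * inverse (norm (c x)))) *\<^sub>R c x)) (at x)"
    by (rule has_derivative_scaleR[OF di dc])
  from this[unfolded c_def] show ?thesis
  proof (rule has_derivative_eq_rhs)
    show "(\<lambda>h. inverse (norm (a x \<times> b x)) *\<^sub>R Dc h + (- (inverse (norm (a x \<times> b x)) * (Dc h \<bullet> sgn (a x \<times> b x)) * inverse (norm (a x \<times> b x)))) *\<^sub>R (a x \<times> b x)) =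
      (\<lambda>h. inverse (norm (a x \<times> b x)) *\<^sub>R (Da h \<times> b x + a x \<times> Db h)
        - (((a x \<times> b x) \<bullet> (Da h \<times> b x + a x \<times> Db h)) / norm (a x \<times> b x) ^ 3) *\<^sub>R (a x \<times> b x))"
      unfolding Dc_def sgn_div_norm
      by (rule ext) (simp add: inner_commute field_simps power3_eq_cube add.commute)
  qed
qed




lemma vec2_expand: "h = h$1 *\<^sub>R axis 1 1 + h$2 *\<^sub>R (axis 2 1 :: real^2)" for h :: "real^2"
  by (simp add: vec_eq_iff forall_2 axis_def)

lemma lin2: "linear L \<Longrightarrow> L h = h$1 *\<^sub>R L (axis 1 1) + h$2 *\<^sub>R L (axis 2 1)" for h :: "real^2"
  by (subst vec2_expand) (simp add: linear_add linear_scale)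

lemma bpt_eq: "bpt s = s *\<^sub>R axis 1 1"
  by (simp add: bpt_def vec_eq_iff forall_2 axis_def vector_def)

lemma bpt_2: "bpt s $ 2 = 0" and bpt_1: "bpt s $ 1 = s"
  by (simp_all add: bpt_def vector_def)

lemma eq_bpt: "w $ 2 = 0 \<Longrightarrow> w = bpt (w $ 1)" for w :: "real^2"
  by (simp add: bpt_def vec_eq_iff forall_2 vector_def)

lemma norm2_sq: "(norm x)\<^sup>2 = (x$1)\<^sup>2 + (x$2)\<^sup>2" for x :: "real^2"
proof -
  have "(norm x)\<^sup>2 = x \<bullet> x" by (simp add: dot_square_norm)
  also have "\<dots> = x$1 * x$1 + x$2 * x$2" by (simp only: inner_vec_def sum_2 inner_real_def)
  finally show ?thesis by (simp add: power2_eq_square)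
qed



lemma dist2_le:
  fixes x y z :: "real^2"
  assumes "x$1 = y$1" "\<bar>x$2 - z$2\<bar> \<le> \<bar>y$2 - z$2\<bar>"
  shows "dist x z \<le> dist y z"
proof -
  have sq: "(x$2 - z$2)\<^sup>2 \<le> (y$2 - z$2)\<^sup>2" using assms(2) abs_le_square_iff by blast
  have "(dist x z)\<^sup>2 = (x$1 - z$1)\<^sup>2 + (x$2 - z$2)\<^sup>2" unfolding dist_norm norm2_sq by simp
  also have "\<dots> \<le> (y$1 - z$1)\<^sup>2 + (y$2 - z$2)\<^sup>2" unfolding assms(1) by (rule add_left_mono[OF sq])
  also have "\<dots> = (dist y z)\<^sup>2" unfolding dist_norm norm2_sq by simp
  finally have "(dist x z)\<^sup>2 \<le> (dist y z)\<^sup>2" .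
  then show ?thesis by (rule power2_le_imp_le) simp
qed



lemma half_unique:
  fixes f :: "real^2 \<Rightarrow> 'b::real_normed_vector"
  assumes U: "open U" and w: "w \<in> U" "w$2 \<le> 0"
    and d1: "(f has_derivative f') (at w within {y\<in>U. y$2 \<le> 0})"
    and d2: "(f has_derivative f'') (at w within {y\<in>U. y$2 \<le> 0})"
  shows "f' = f''"
proof (rule frechet_derivative_unique_within[OF d1 d2])
  fix i :: "real^2" and e :: real assume i: "i \<in> Basis" and e: "e > 0"
  obtain r where r: "r > 0" "ball w r \<subseteq> U" using U w open_contains_ball by blast
  define d where "d = - min (e/2) (r/2)"
  obtain j where ij: "i = axis j 1" using i by (auto simp: Basis_vec_def)
  have ni: "norm i = 1" using ij by simp
  have i2: "i $ 2 \<ge> 0" using ij by (simp add: axis_def)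
  have "w + d *\<^sub>R i \<in> ball w r"
    using r e ni by (simp add: dist_norm d_def)
  moreover have "(w + d *\<^sub>R i) $ 2 \<le> 0"
  proof -
    have "0 \<le> min (e/2) (r/2) * i$2" using i2 r e by (intro mult_nonneg_nonneg) auto
    then show ?thesis using w(2) by (simp add: d_def)
  qed
  ultimately have "w + d *\<^sub>R i \<in> {y\<in>U. y$2 \<le> 0}" using r by auto
  moreover have "0 < \<bar>d\<bar>" "\<bar>d\<bar> < e" using r e by (auto simp: d_def)
  ultimately show "\<exists>d. 0 < \<bar>d\<bar> \<and> \<bar>d\<bar> < e \<and> w + d *\<^sub>R i \<in> {y\<in>U. y$2 \<le> 0}" by blast
qed



lemma inner_const_deriv:
  fixes f g :: "real^2 \<Rightarrow> real^3"
  assumes U: "open U" "x \<in> U" and k: "\<And>y. y \<in> U \<Longrightarrow> f y \<bullet> g y = k"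
    and df: "(f has_derivative f') (at x)" and dg: "(g has_derivative g') (at x)"
  shows "f x \<bullet> g' h + f' h \<bullet> g x = 0"
proof -
  have 1: "((\<lambda>y. f y \<bullet> g y) has_derivative (\<lambda>h. f x \<bullet> g' h + f' h \<bullet> g x)) (at x)"
    by (rule has_derivative_inner[OF df dg])
  have "((\<lambda>y. k) has_derivative (\<lambda>h. f x \<bullet> g' h + f' h \<bullet> g x)) (at x)"
    by (rule has_derivative_transform_within_open[OF 1 U]) (simp add: k)
  moreover have "((\<lambda>y. k) has_derivative (\<lambda>h. 0)) (at x)" by simp
  ultimately have "(\<lambda>h. f x \<bullet> g' h + f' h \<bullet> g x) = (\<lambda>h. 0)" using has_derivative_unique by blast
  then show ?thesis by metis
qed



lemma lim_from_below:
  fixes f :: "real^2 \<Rightarrow> 'b::real_normed_vector"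
  assumes U: "open U" "x \<in> U" "x$2 \<le> 0" and c: "continuous_on U f"
    and z: "\<And>y. y \<in> U \<Longrightarrow> y$2 < 0 \<Longrightarrow> f y = 0"
  shows "f x = 0"
proof -
  define y where "y = (\<lambda>k::nat. x - (inverse (real (Suc k))) *\<^sub>R (axis 2 1 :: real^2))"
  have ly: "y \<longlonglongrightarrow> x"
  proof -
    have "(\<lambda>k::nat. inverse (real (Suc k))) \<longlonglongrightarrow> 0" by (rule LIMSEQ_inverse_real_of_nat)
    then have "(\<lambda>k. x - (inverse (real (Suc k))) *\<^sub>R (axis 2 1 :: real^2)) \<longlonglongrightarrow> x - 0 *\<^sub>R axis 2 1"
      by (intro tendsto_intros)
    then show ?thesis by (simp add: y_def)
  qed
  have ev: "eventually (\<lambda>k. y k \<in> U) sequentially"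
    using ly U(1,2) by (simp add: tendsto_def)
  have "eventually (\<lambda>k. f (y k) = 0) sequentially"
  proof (rule eventually_mono[OF ev])
    fix k assume "y k \<in> U"
    moreover have "y k $ 2 < 0"
    proof -
      have a: "0 < inverse (1 + real k)" by simp
      have "y k $ 2 = x$2 - inverse (1 + real k)" by (simp add: y_def axis_def)
      then show ?thesis using U(3) a by linarith
    qed
    ultimately show "f (y k) = 0" using z by blast
  qed
  then have l0: "(\<lambda>k. f (y k)) \<longlonglongrightarrow> 0" by (rule tendsto_eventually)
  have "isCont f x" using c U continuous_on_eq_continuous_at by blast
  then have "(\<lambda>k. f (y k)) \<longlonglongrightarrow> f x" using ly isCont_tendsto_compose by blast
  then show ?thesis using l0 LIMSEQ_unique by blast
qed






theorem lemma3p7: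
  fixes X N :: "real^2 \<Rightarrow> real^3" and W :: "(real^2) set" and p0 :: real
  assumes W_open: "open W"
    and X_C1: "Ck 1 W X"
    and X_immersion: "\<forall>w\<in>W. inj (frechet_derivative X (at w))"
    and N_cont: "continuous_on W N"
    and N_unit: "\<forall>w\<in>W. norm (N w) = 1"
    and N_normal: "\<forall>w\<in>W. \<forall>h. N w \<bullet> frechet_derivative X (at w) h = 0"
    and S_smooth: "\<exists>W1 Y. open W1 \<and> {w\<in>W. w$2 \<ge> 0} \<subseteq> W1 \<and> smooth_on W1 Y \<and>
                        (\<forall>w\<in>W. w$2 \<ge> 0 \<longrightarrow> X w = Y w)"
    and ext_smooth: "\<exists>W2 Z. open W2 \<and> {w\<in>W. w$2 \<le> 0} \<subseteq> W2 \<and> smooth_on W2 Z \<and>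
                        (\<forall>w\<in>W. w$2 \<le> 0 \<longrightarrow> X w = Z w)"
    and ext_flat: "\<forall>w\<in>W. w$2 < 0 \<longrightarrow> gauss_curv X w = 0"
    and gauss_imm: "\<forall>t. bpt t \<in> W \<longrightarrow>
                      (\<exists>d. ((\<lambda>s. N (bpt s)) has_vector_derivative d) (at t) \<and> d \<noteq> 0)"
    and p: "bpt p0 \<in> W"
  shows "\<exists>V. openin (top_of_set {w\<in>W. w$2 \<le> 0}) V \<and> bpt p0 \<in> V \<and>
             pi2 ` legendre_lift X N V \<subseteq> dual_boundary X N {t. bpt t \<in> W}"
proof -
  define e1 :: "real^2" where "e1 = axis 1 1"
  define e2 :: "real^2" where "e2 = axis 2 1"
  obtain W2 Z where W2o: "open W2" and W2s: "{w\<in>W. w$2 \<le> 0} \<subseteq> W2"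
     and Zs: "smooth_on W2 Z" and XZ: "\<And>w. w\<in>W \<Longrightarrow> w$2 \<le> 0 \<Longrightarrow> X w = Z w"
    using ext_smooth by blast
  have Ck1: "Ck (Suc 0) W2 Z" and Ck2: "Ck (Suc (Suc 0)) W2 Z" using Zs smooth_on_def by blast+
  have Zdiff: "\<And>x. x\<in>W2 \<Longrightarrow> Z differentiable at x"
    using Ck1 W2o by (simp add: differentiable_on_eq_differentiable_at)
  have dZc: "\<And>v. continuous_on W2 (\<lambda>x. frechet_derivative Z (at x) v)"
    using Ck1 by simp
  have dZd: "\<And>v x. x\<in>W2 \<Longrightarrow> (\<lambda>x. frechet_derivative Z (at x) v) differentiable at x"
    using Ck2 W2o by (simp add: differentiable_on_eq_differentiable_at)
  have ddZc: "\<And>v v'. continuous_on W2 (\<lambda>x. frechet_derivative (\<lambda>x. frechet_derivative Z (at x) v) (at x) v')"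
    using Ck2 by simp
  have Xdiff: "\<And>x. x\<in>W \<Longrightarrow> X differentiable at x"
    using X_C1 W_open by (simp add: differentiable_on_eq_differentiable_at)
  define a where "a = pd_u Z"
  define b where "b = pd_v Z"
  have a_eq: "a = (\<lambda>x. frechet_derivative Z (at x) e1)" by (auto simp: a_def pd_u_def e1_def)
  have b_eq: "b = (\<lambda>x. frechet_derivative Z (at x) e2)" by (auto simp: b_def pd_v_def e2_def)
  define Da where "Da x = frechet_derivative a (at x)" for x
  define Db where "Db x = frechet_derivative b (at x)" for x
  have da: "\<And>x. x\<in>W2 \<Longrightarrow> (a has_derivative Da x) (at x)"
    unfolding Da_def a_eq using dZd frechet_derivative_works by blast
  have db: "\<And>x. x\<in>W2 \<Longrightarrow> (b has_derivative Db x) (at x)"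
    unfolding Db_def b_eq using dZd frechet_derivative_works by blast
  have dZ: "\<And>x. x\<in>W2 \<Longrightarrow> (Z has_derivative frechet_derivative Z (at x)) (at x)"
    using Zdiff frechet_derivative_works by blast
  have lin_dZ: "\<And>x. x\<in>W2 \<Longrightarrow> linear (frechet_derivative Z (at x))"
    using dZ has_derivative_linear by blast
  have ac: "continuous_on W2 a" unfolding a_eq by (rule dZc)
  have bc: "continuous_on W2 b" unfolding b_eq by (rule dZc)
  have Dac: "\<And>h. continuous_on W2 (\<lambda>x. Da x h)" unfolding Da_def a_eq by (rule ddZc)
  have Dbc: "\<And>h. continuous_on W2 (\<lambda>x. Db x h)" unfolding Db_def b_eq by (rule ddZc)
  define c where "c y = a y \<times> b y" for y
  define n where "n y = inverse (norm (c y)) *\<^sub>R c y" for y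
  define Dn where "Dn x h = inverse (norm (c x)) *\<^sub>R (Da x h \<times> b x + a x \<times> Db x h)
        - ((c x \<bullet> (Da x h \<times> b x + a x \<times> Db x h)) / norm (c x) ^ 3) *\<^sub>R c x" for x h
  have dn: "\<And>x. x\<in>W2 \<Longrightarrow> c x \<noteq> 0 \<Longrightarrow> (n has_derivative Dn x) (at x)"
  proof -
    fix x assume x: "x \<in> W2" "c x \<noteq> 0"
    show "(n has_derivative Dn x) (at x)"
      using n_deriv[OF da[OF x(1)] db[OF x(1)]] x(2)
      unfolding n_def Dn_def c_def by (simp add: fun_eq_iff)
  qed
  have cc: "continuous_on W2 c" unfolding c_def by (intro continuous_on_cross ac bc)
  define U1 where "U1 = {x\<in>W \<inter> W2. c x \<noteq> 0}"
  have U1o: "open U1"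
  proof -
    have "U1 = (W \<inter> W2) \<inter> c -` (- {0})" by (auto simp: U1_def)
    moreover have "open ((W \<inter> W2) \<inter> c -` (- {0}))"
      by (rule continuous_open_preimage) (use continuous_on_subset[OF cc, of "W \<inter> W2"] W_open W2o in auto)
    ultimately show ?thesis by simp
  qed
  have U1W: "U1 \<subseteq> W" and U1W2: "U1 \<subseteq> W2" by (auto simp: U1_def)
  have cU1: "continuous_on U1 c" using cc U1W2 continuous_on_subset by blast
  have c0: "\<And>x. x \<in> U1 \<Longrightarrow> c x \<noteq> 0" by (auto simp: U1_def)
  have Dnc: "\<And>h. continuous_on U1 (\<lambda>x. Dn x h)"
  proof -
    fix h
    have "continuous_on U1 (\<lambda>x. Da x h)" using Dac U1W2 continuous_on_subset by blast
    moreover have "continuous_on U1 (\<lambda>x. Db x h)" using Dbc U1W2 continuous_on_subset by blast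
    moreover have "continuous_on U1 a" using ac U1W2 continuous_on_subset by blast
    moreover have "continuous_on U1 b" using bc U1W2 continuous_on_subset by blast
    ultimately show "continuous_on U1 (\<lambda>x. Dn x h)"
      unfolding Dn_def using cU1 c0
      by (intro continuous_intros continuous_on_cross) auto
  qed
  have nc: "continuous_on U1 n"
    unfolding n_def using cU1 c0 by (intro continuous_intros) auto

  have dXZ: "\<And>w. w\<in>W \<Longrightarrow> w$2 \<le> 0 \<Longrightarrow> frechet_derivative X (at w) = frechet_derivative Z (at w)"
  proof -
    fix w assume w: "w \<in> W" "w$2 \<le> 0"
    have wW2: "w \<in> W2" using w W2s by auto
    define S where "S = {y\<in>W \<inter> W2. y$2 \<le> 0}"
    have "(X has_derivative frechet_derivative X (at w)) (at w within S)"
      using Xdiff[OF w(1)] frechet_derivative_works has_derivative_at_withinI by blast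
    then have 1: "(Z has_derivative frechet_derivative X (at w)) (at w within S)"
      by (rule has_derivative_transform_within[of _ _ _ _ 1]) (use w wW2 XZ in \<open>auto simp: S_def\<close>)
    have 2: "(Z has_derivative frechet_derivative Z (at w)) (at w within S)"
      using dZ[OF wW2] has_derivative_at_withinI by blast
    show "frechet_derivative X (at w) = frechet_derivative Z (at w)"
      by (rule half_unique[of "W \<inter> W2" w Z]) (use W_open W2o w wW2 1 2 in \<open>auto simp: S_def\<close>)
  qed
  have lowerU1: "\<And>w. w\<in>W \<Longrightarrow> w$2 \<le> 0 \<Longrightarrow> w \<in> U1"
  proof -
    fix w assume w: "w \<in> W" "w$2 \<le> 0"
    have wW2: "w \<in> W2" using w W2s by auto
    have "linear (frechet_derivative X (at w))"
      using Xdiff[OF w(1)] frechet_derivative_works has_derivative_linear by blast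
    then have "frechet_derivative X (at w) e1 \<times> frechet_derivative X (at w) e2 \<noteq> 0"
      using inj_linear_cross X_immersion w(1) unfolding e1_def e2_def by blast
    then have "c w \<noteq> 0" unfolding c_def a_eq b_eq using dXZ[OF w] by simp
    then show "w \<in> U1" using w wW2 by (simp add: U1_def)
  qed
  have Nperp: "\<And>w h. w\<in>W \<Longrightarrow> w$2 \<le> 0 \<Longrightarrow> N w \<bullet> frechet_derivative Z (at w) h = 0"
    using N_normal dXZ by metis
  define pp where "pp = bpt p0"
  have pp2: "pp$2 = 0" by (simp add: pp_def bpt_2)
  have ppU1: "pp \<in> U1" using lowerU1 p pp2 by (simp add: pp_def)
  obtain r where r: "r > 0" "ball pp r \<subseteq> U1" using U1o ppU1 open_contains_ball by blast
  define B0 where "B0 = {w\<in>ball pp r. w$2 \<le> 0}"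
  have B0U1: "B0 \<subseteq> U1" using r by (auto simp: B0_def)
  have B0W: "B0 \<subseteq> W" using B0U1 U1W by auto
  have ppB0: "pp \<in> B0" using r pp2 by (simp add: B0_def)
  have Npm: "(N w \<bullet> n w)\<^sup>2 = 1 \<and> N w = (N w \<bullet> n w) *\<^sub>R n w" if w: "w \<in> B0" for w
  proof -
    have wW: "w \<in> W" and w2: "w$2 \<le> 0" using w B0W by (auto simp: B0_def)
    have "N w \<bullet> a w = 0" "N w \<bullet> b w = 0" using Nperp[OF wW w2] by (auto simp: a_eq b_eq)
    moreover have "norm (N w) = 1" using N_unit wW by blast
    moreover have "a w \<times> b w \<noteq> 0" using c0 B0U1 w by (auto simp: c_def)
    ultimately show ?thesis using unit_normal_pm[of "N w" "a w" "b w"]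
      by (simp add: n_def c_def inverse_eq_divide)
  qed
  have convB0: "convex B0"
  proof -
    have "convex {w::real^2. w$2 \<le> 0}"
      unfolding convex_def
    proof (intro allI impI ballI, simp)
      fix x y :: "real^2" and u v :: real
      assume "x$2 \<le> 0" "y$2 \<le> 0" "0 \<le> u" "0 \<le> v"
      then show "u * x$2 + v * y$2 \<le> 0"
        by (simp add: add_nonpos_nonpos mult_nonneg_nonpos)
    qed
    then have "convex (ball pp r \<inter> {w::real^2. w$2 \<le> 0})" by (intro convex_Int convex_ball)
    moreover have "B0 = ball pp r \<inter> {w::real^2. w$2 \<le> 0}" by (auto simp: B0_def)
    ultimately show ?thesis by simp
  qed
  define \<sigma> where "\<sigma> = N pp \<bullet> n pp"
  have phic: "(\<lambda>w. N w \<bullet> n w) constant_on B0"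
  proof (rule continuous_finite_range_constant)
    show "connected B0" using convB0 convex_connected by blast
    show "continuous_on B0 (\<lambda>w. N w \<bullet> n w)"
      using continuous_on_subset[OF N_cont B0W] continuous_on_subset[OF nc B0U1]
      by (intro continuous_intros)
    have "(\<lambda>w. N w \<bullet> n w) ` B0 \<subseteq> {-1, 1}"
    proof
      fix z assume "z \<in> (\<lambda>w. N w \<bullet> n w) ` B0"
      then obtain w where w: "w \<in> B0" "z = N w \<bullet> n w" by blast
      then have "z\<^sup>2 = 1" using Npm by blast
      then show "z \<in> {-1, 1}" by (auto simp: power2_eq_1_iff)
    qed
    then show "finite ((\<lambda>w. N w \<bullet> n w) ` B0)" using finite_subset by blast
  qed
  have NB0: "N w = \<sigma> *\<^sub>R n w" if "w \<in> B0" for w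
  proof -
    have "N w \<bullet> n w = \<sigma>" using phic ppB0 that unfolding \<sigma>_def constant_on_def by metis
    then show ?thesis using Npm[OF that] by simp
  qed

  have Weing: "n x \<bullet> Da x h + Dn x h \<bullet> a x = 0" "n x \<bullet> Db x h + Dn x h \<bullet> b x = 0"
      "Dn x h \<bullet> n x = 0" if x: "x \<in> U1" for x h
  proof -
    have xW2: "x \<in> W2" using x U1W2 by auto
    have dnx: "(n has_derivative Dn x) (at x)" using dn xW2 c0 x by blast
    have na: "n y \<bullet> a y = 0" for y by (simp add: n_def c_def dot_cross_self)
    have nb: "n y \<bullet> b y = 0" for y by (simp add: n_def c_def dot_cross_self)
    have nn: "n y \<bullet> n y = 1" if "y \<in> U1" for y
    proof -
      have "norm (n y) = 1" using c0[OF that] by (simp add: n_def)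
      then show ?thesis by (simp add: dot_square_norm)
    qed
    show "n x \<bullet> Da x h + Dn x h \<bullet> a x = 0"
      by (rule inner_const_deriv[OF U1o x _ dnx da[OF xW2]]) (use na in simp)
    show "n x \<bullet> Db x h + Dn x h \<bullet> b x = 0"
      by (rule inner_const_deriv[OF U1o x _ dnx db[OF xW2]]) (use nb in simp)
    have "n x \<bullet> Dn x h + Dn x h \<bullet> n x = 0"
      by (rule inner_const_deriv[OF U1o x _ dnx dnx]) (use nn in simp)
    then show "Dn x h \<bullet> n x = 0" by (simp add: inner_commute)
  qed
  have symm: "Da x e2 = Db x e1" if x: "x \<in> W2" for x
  proof -
    have "pd_v (pd_u Z) x = pd_u (pd_v Z) x"
    proof (rule schwarz[OF W2o Zdiff _ _ _ _ x])
      show "\<And>y. y \<in> W2 \<Longrightarrow> pd_u Z differentiable at y" using dZd by (simp add: pd_u_def[abs_def])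
      show "\<And>y. y \<in> W2 \<Longrightarrow> pd_v Z differentiable at y" using dZd by (simp add: pd_v_def[abs_def])
      show "continuous_on W2 (pd_v (pd_u Z))" using ddZc by (simp add: pd_v_def[abs_def] pd_u_def[abs_def])
      show "continuous_on W2 (pd_u (pd_v Z))" using ddZc by (simp add: pd_v_def[abs_def] pd_u_def[abs_def])
    qed
    then show ?thesis by (simp add: Da_def Db_def a_def b_def pd_u_def pd_v_def e1_def e2_def)
  qed
  have rank_neg: "Dn x e1 \<times> Dn x e2 = 0" if x: "x \<in> U1" "x$2 < 0" for x
  proof -
    have xW: "x \<in> W" and xW2: "x \<in> W2" using x U1W U1W2 by auto
    define Q where "Q = {y\<in>W \<inter> W2. y$2 < 0}"
    have Qo: "open Q"
    proof -
      have "Q = (W \<inter> W2) \<inter> {y. y$2 < 0}" by (auto simp: Q_def)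
      moreover have "open {y::real^2. y$2 < 0}"
      proof -
        have "{y::real^2. y$2 < 0} = {y. (axis 2 1 :: real^2) \<bullet> y < 0}" by (simp add: inner_axis')
        then show ?thesis using open_halfspace_lt by metis
      qed
      ultimately show ?thesis using W_open W2o by auto
    qed
    have xQ: "x \<in> Q" using x xW xW2 by (simp add: Q_def)
    have XZQ: "\<And>y. y \<in> Q \<Longrightarrow> Z y = X y" using XZ by (auto simp: Q_def)
    have fdQ: "\<And>y. y \<in> Q \<Longrightarrow> frechet_derivative Z (at y) = frechet_derivative X (at y)"
      by (rule frechet_derivative_transform_within_open[OF _ Qo]) (use Zdiff XZQ in \<open>auto simp: Q_def\<close>)
    have puQ: "\<And>y. y \<in> Q \<Longrightarrow> pd_u Z y = pd_u X y" and pvQ: "\<And>y. y \<in> Q \<Longrightarrow> pd_v Z y = pd_v X y"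
      using fdQ by (auto simp: pd_u_def pd_v_def)
    have adiff: "a differentiable at x" using da xW2 differentiableI by blast
    have bdiff: "b differentiable at x" using db xW2 differentiableI by blast
    have e_uu: "frechet_derivative (pd_u Z) (at x) = frechet_derivative (pd_u X) (at x)"
      by (rule frechet_derivative_transform_within_open[OF _ Qo xQ]) (use adiff puQ a_def in auto)
    have e_vv: "frechet_derivative (pd_v Z) (at x) = frechet_derivative (pd_v X) (at x)"
      by (rule frechet_derivative_transform_within_open[OF _ Qo xQ]) (use bdiff pvQ b_def in auto)
    have gx: "gauss_curv X x = 0" using ext_flat xW x(2) by blast
    define L where "L = Da x e1 \<bullet> n x"
    define M where "M = Da x e2 \<bullet> n x"
    define NN where "NN = Db x e2 \<bullet> n x"
    have cx: "c x \<noteq> 0" using c0 x by blast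
    have den: "(a x \<bullet> a x) * (b x \<bullet> b x) - (a x \<bullet> b x)\<^sup>2 = (norm (c x))\<^sup>2"
      using norm_cross_dot[of "a x" "b x"] unfolding c_def
      by (simp add: dot_square_norm power_mult_distrib)
    have q1: "pd_u X x = a x" "pd_v X x = b x" using puQ[OF xQ] pvQ[OF xQ] by (simp_all add: a_def b_def)
    have q2: "pd_u (pd_u X) x = Da x e1" "pd_v (pd_u X) x = Da x e2" "pd_v (pd_v X) x = Db x e2"
      using e_uu e_vv by (simp_all add: pd_u_def[of "pd_u X"] pd_v_def[of "pd_u X"] pd_v_def[of "pd_v X"]
          Da_def Db_def a_def b_def e1_def e2_def)
    have nx: "(1 / norm (cross3 (a x) (b x))) *\<^sub>R cross3 (a x) (b x) = n x"
      by (simp add: n_def c_def inverse_eq_divide)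
    have "gauss_curv X x = ((Da x e1 \<bullet> n x) * (Db x e2 \<bullet> n x) - (Da x e2 \<bullet> n x)\<^sup>2) /
        ((a x \<bullet> a x) * (b x \<bullet> b x) - (a x \<bullet> b x)\<^sup>2)"
      unfolding gauss_curv_def Let_def q1 q2 nx ..
    then have "gauss_curv X x = (L * NN - M\<^sup>2) / (norm (c x))\<^sup>2"
      unfolding den L_def M_def NN_def .
    then have LMN: "L * NN - M\<^sup>2 = 0" using gx cx by simp
    have W1: "Dn x e1 \<bullet> a x = - L" "Dn x e2 \<bullet> a x = - M"
      "Dn x e1 \<bullet> b x = - M" "Dn x e2 \<bullet> b x = - NN"
      using Weing[OF x(1), of e1] Weing[OF x(1), of e2] symm[OF xW2]
      by (auto simp: L_def M_def NN_def inner_commute)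
    have cn: "c x = norm (c x) *\<^sub>R n x" using cx by (simp add: n_def)
    have p1: "Dn x e1 \<bullet> (a x \<times> b x) = 0" "Dn x e2 \<bullet> (a x \<times> b x) = 0"
      using Weing(3)[OF x(1)] cn unfolding c_def by (metis inner_scaleR_right mult_zero_right)+
    show ?thesis
      by (rule rank_lemma[OF p1]) (use cx LMN W1 in \<open>auto simp: c_def power2_eq_square\<close>)
  qed
  have rank: "Dn x e1 \<times> Dn x e2 = 0" if x: "x \<in> U1" "x$2 \<le> 0" for x
    by (rule lim_from_below[OF U1o x]) (use Dnc rank_neg in \<open>auto intro: continuous_on_cross\<close>)

  have linDn: "linear (Dn x)" if "x \<in> U1" for x
    using dn[of x] that U1W2 c0 has_derivative_linear by blast
  have Dnp: "Dn pp e1 \<noteq> 0"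
  proof -
    obtain d where d: "((\<lambda>s. N (bpt s)) has_vector_derivative d) (at p0)" "d \<noteq> 0"
      using gauss_imm p by blast
    have dbpt: "(bpt has_derivative (\<lambda>h. h *\<^sub>R e1)) (at p0)"
      unfolding bpt_eq[abs_def] e1_def by (auto intro!: derivative_eq_intros)
    have dnp: "(n has_derivative Dn pp) (at (bpt p0))"
      using dn[of pp] ppU1 U1W2 c0 by (auto simp: pp_def)
    have "((\<lambda>s. \<sigma> *\<^sub>R n (bpt s)) has_derivative (\<lambda>h. \<sigma> *\<^sub>R Dn pp (h *\<^sub>R e1))) (at p0)"
      using has_derivative_compose[OF dbpt dnp] by (auto intro!: derivative_eq_intros simp: o_def)
    then have "((\<lambda>s. \<sigma> *\<^sub>R n (bpt s)) has_derivative (\<lambda>h. h *\<^sub>R (\<sigma> *\<^sub>R Dn pp e1))) (at p0)"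
      using linear_scale[OF linDn[OF ppU1]] by (simp add: ac_simps)
    then have "((\<lambda>s. N (bpt s)) has_derivative (\<lambda>h. h *\<^sub>R (\<sigma> *\<^sub>R Dn pp e1))) (at p0)"
    proof (rule has_derivative_transform_within_open[where s = "ball p0 r"])
      show "open (ball p0 r)" "p0 \<in> ball p0 r" using r by auto
      fix s assume s: "s \<in> ball p0 r"
      have "dist (bpt s) pp = dist s p0"
        by (simp add: pp_def bpt_eq dist_norm scaleR_diff_left[symmetric] e1_def)
      then have "bpt s \<in> B0" using s by (simp add: B0_def bpt_2 dist_commute)
      then show "\<sigma> *\<^sub>R n (bpt s) = N (bpt s)" using NB0 by simp
    qed
    then have "((\<lambda>s. N (bpt s)) has_vector_derivative (\<sigma> *\<^sub>R Dn pp e1)) (at p0)"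
      by (simp add: has_vector_derivative_def)
    then have "d = \<sigma> *\<^sub>R Dn pp e1" using d(1) vector_derivative_unique_at by blast
    then show ?thesis using d(2) by auto
  qed
  obtain k where k: "Dn pp e1 $ k \<noteq> 0" using Dnp by (metis vec_eq_iff zero_index)

  define \<Phi> where "\<Phi> y = (n y $ k) *\<^sub>R e1 + (y $ 2) *\<^sub>R e2" for y
  define D\<Phi> where "D\<Phi> x h = (Dn x h $ k) *\<^sub>R e1 + (h $ 2) *\<^sub>R e2" for x h
  have e1c: "e1 $ 1 = 1" "e1 $ 2 = 0" and e2c: "e2 $ 1 = 0" "e2 $ 2 = 1"
    by (simp_all add: e1_def e2_def axis_def)
  have \<Phi>2: "\<Phi> y $ 2 = y $ 2" and \<Phi>1: "\<Phi> y $ 1 = n y $ k" for y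
    by (simp_all add: \<Phi>_def e1c e2c)
  have D\<Phi>2: "D\<Phi> x h $ 2 = h $ 2" and D\<Phi>1: "D\<Phi> x h $ 1 = Dn x h $ k" for x h
    by (simp_all add: D\<Phi>_def e1c e2c)
  have d\<Phi>: "(\<Phi> has_derivative D\<Phi> x) (at x)" if x: "x \<in> U1" for x
  proof -
    have dnx: "(n has_derivative Dn x) (at x)" using dn[of x] x U1W2 c0 by blast
    have "((\<lambda>y. n y $ k) has_derivative (\<lambda>h. Dn x h $ k)) (at x)"
      using bounded_linear.has_derivative[OF bounded_linear_vec_nth dnx] .
    moreover have "((\<lambda>y. y $ 2) has_derivative (\<lambda>h. h $ 2)) (at x)"
      using bounded_linear.has_derivative[OF bounded_linear_vec_nth has_derivative_ident] .
    ultimately show ?thesis unfolding \<Phi>_def[abs_def] D\<Phi>_def[abs_def]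
      by (intro derivative_intros)
  qed
  have blD\<Phi>: "bounded_linear (D\<Phi> x)" if "x \<in> U1" for x
    using d\<Phi>[OF that] has_derivative_bounded_linear by blast
  define f' where "f' x = Blinfun (D\<Phi> x)" for x
  have f'a: "blinfun_apply (f' x) = D\<Phi> x" if "x \<in> U1" for x
    unfolding f'_def using blD\<Phi>[OF that] bounded_linear_Blinfun_apply by blast
  define \<alpha> where "\<alpha> = Dn pp e1 $ k"
  define \<beta> where "\<beta> = Dn pp e2 $ k"
  define iv where "iv y = ((y$1 - \<beta> * y$2) / \<alpha>) *\<^sub>R e1 + (y$2) *\<^sub>R e2" for y :: "real^2"
  have bliv: "bounded_linear iv"
  proof -
    have "linear iv"
    proof (rule linearI)
      fix x y :: "real^2" and t :: real
      show "iv (x + y) = iv x + iv y"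
        by (simp add: iv_def algebra_simps add_divide_distrib diff_divide_distrib)
      show "iv (t *\<^sub>R x) = t *\<^sub>R iv x"
        by (simp add: iv_def algebra_simps diff_divide_distrib)
    qed
    then show ?thesis by (simp add: linear_conv_bounded_linear)
  qed
  obtain U' V g g' where U'o: "open U'" and U'sub: "U' \<subseteq> ball pp r" and ppU': "pp \<in> U'"
    and Vo: "open V" and \<Phi>ppV: "\<Phi> pp \<in> V" and hom: "homeomorphism U' V \<Phi> g"
    and dg: "\<And>y. y \<in> V \<Longrightarrow> (g has_derivative (g' y)) (at y)"
    and g'inv: "\<And>y. y \<in> V \<Longrightarrow> g' y = inv (blinfun_apply (f' (g y)))"
    and bij: "\<And>y. y \<in> V \<Longrightarrow> bij (blinfun_apply (f' (g y)))"
  proof (rule inverse_function_theorem[of "ball pp r" \<Phi> f' pp "Blinfun iv"])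
    show "open (ball pp r)" by simp
    show "pp \<in> ball pp r" using r by simp
    fix x assume "x \<in> ball pp r"
    then have "x \<in> U1" using r by auto
    then show "(\<Phi> has_derivative blinfun_apply (f' x)) (at x)" using d\<Phi> f'a by simp
  next
    show "continuous_on (ball pp r) f'"
    proof (rule continuous_on_blinfun_componentwise)
      fix i :: "real^2" assume "i \<in> Basis"
      have "continuous_on (ball pp r) (\<lambda>x. D\<Phi> x i)"
        unfolding D\<Phi>_def using continuous_on_subset[OF Dnc r(2)]
        by (intro continuous_intros) auto
      moreover have "\<And>x. x \<in> ball pp r \<Longrightarrow> f' x i = D\<Phi> x i" using f'a r by auto
      ultimately show "continuous_on (ball pp r) (\<lambda>x. f' x i)"
        using continuous_on_cong by (metis (no_types, lifting))
    qed
  next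
    show "Blinfun iv o\<^sub>L f' pp = id_blinfun"
    proof (rule blinfun_eqI)
      fix h :: "real^2"
      have "Dn pp h = h$1 *\<^sub>R Dn pp e1 + h$2 *\<^sub>R Dn pp e2"
        using lin2[OF linDn[OF ppU1], of h] by (simp add: e1_def e2_def)
      then have "D\<Phi> pp h $ 1 = \<alpha> * h$1 + \<beta> * h$2" by (simp add: D\<Phi>1 \<alpha>_def \<beta>_def)
      moreover have "D\<Phi> pp h $ 2 = h$2" by (rule D\<Phi>2)
      ultimately have "iv (D\<Phi> pp h) = h"
        using k unfolding iv_def \<alpha>_def[symmetric]
        by (simp add: vec_eq_iff forall_2 e1c e2c field_simps)
      moreover have "blinfun_apply (Blinfun iv o\<^sub>L f' pp) h = iv (D\<Phi> pp h)"
        by (simp only: blinfun_apply_blinfun_compose f'a[OF ppU1] bounded_linear_Blinfun_apply[OF bliv])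
      ultimately show "blinfun_apply (Blinfun iv o\<^sub>L f' pp) h = blinfun_apply id_blinfun h"
        by simp
    qed
  qed (rule that; assumption)
  obtain \<epsilon> where \<epsilon>: "\<epsilon> > 0" "ball (\<Phi> pp) \<epsilon> \<subseteq> V" using Vo \<Phi>ppV open_contains_ball by blast
  have U'U1: "U' \<subseteq> U1" using U'sub r by auto
  define Vs where "Vs = {w\<in>U'. \<Phi> w \<in> ball (\<Phi> pp) \<epsilon> \<and> w$2 \<le> 0}"
  have hom1: "\<And>x. x \<in> U' \<Longrightarrow> g (\<Phi> x) = x" and hom2: "\<Phi> ` U' = V"
    and hom3: "\<And>y. y \<in> V \<Longrightarrow> \<Phi> (g y) = y" and hom4: "g ` V = U'"
    and hom5: "continuous_on U' \<Phi>"
    using hom by (auto simp: homeomorphism_def)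
  have Vs_open: "openin (top_of_set {w\<in>W. w$2 \<le> 0}) Vs"
  proof -
    have "open (U' \<inter> \<Phi> -` ball (\<Phi> pp) \<epsilon>)"
      by (rule continuous_open_preimage[OF hom5 U'o]) simp
    moreover have "Vs = {w\<in>W. w$2 \<le> 0} \<inter> (U' \<inter> \<Phi> -` ball (\<Phi> pp) \<epsilon>)"
      using U'U1 U1W by (auto simp: Vs_def)
    ultimately show ?thesis by (auto intro: openin_open_Int)
  qed
  have ppVs: "pp \<in> Vs" using ppU' \<epsilon> pp2 by (simp add: Vs_def)

  have main: "pi2 (X w, N w) \<in> dual_boundary X N {t. bpt t \<in> W}" if w: "w \<in> Vs" for w
  proof -
    have wU': "w \<in> U'" and w\<Phi>: "\<Phi> w \<in> ball (\<Phi> pp) \<epsilon>" and w2: "w$2 \<le> 0"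
      using w by (auto simp: Vs_def)
    define a0 where "a0 = n w $ k"
    define s where "s = w $ 2"
    define P where "P \<tau> = a0 *\<^sub>R e1 + \<tau> *\<^sub>R e2" for \<tau>
    have P1: "P \<tau> $ 1 = a0" and P2: "P \<tau> $ 2 = \<tau>" for \<tau> by (simp_all add: P_def e1c e2c)
    have Ps: "P s = \<Phi> w" by (simp add: P_def \<Phi>_def a0_def s_def)
    have \<Phi>pp2: "\<Phi> pp $ 2 = 0" using \<Phi>2 pp2 by simp
    have PV: "P \<tau> \<in> V" if \<tau>: "\<tau> \<in> {s..0}" for \<tau>
    proof -
      have "dist (P \<tau>) (\<Phi> pp) \<le> dist (\<Phi> w) (\<Phi> pp)"
      proof (rule dist2_le)
        show "P \<tau> $ 1 = \<Phi> w $ 1" by (simp add: P1 \<Phi>1 a0_def)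
        show "\<bar>P \<tau> $ 2 - \<Phi> pp $ 2\<bar> \<le> \<bar>\<Phi> w $ 2 - \<Phi> pp $ 2\<bar>"
          using \<tau> by (simp add: P2 \<Phi>2 pp2 s_def[symmetric])
      qed
      then have "P \<tau> \<in> ball (\<Phi> pp) \<epsilon>" using w\<Phi> by (simp add: dist_commute)
      then show ?thesis using \<epsilon> by auto
    qed
    define G where "G \<tau> = g (P \<tau>)" for \<tau>
    have GU': "G \<tau> \<in> U'" if "\<tau> \<in> {s..0}" for \<tau> using hom4 PV[OF that] by (auto simp: G_def)
    have \<Phi>G: "\<Phi> (G \<tau>) = P \<tau>" if "\<tau> \<in> {s..0}" for \<tau> using hom3 PV[OF that] by (simp add: G_def)
    have G2: "G \<tau> $ 2 = \<tau>" if "\<tau> \<in> {s..0}" for \<tau> using \<Phi>G[OF that] \<Phi>2 P2 by metis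
    have GU1: "G \<tau> \<in> U1" if "\<tau> \<in> {s..0}" for \<tau> using GU'[OF that] U'U1 by auto
    have zero: "((\<lambda>\<tau>. n (G \<tau>)) has_derivative (\<lambda>h. 0)) (at \<tau>) \<and>
        ((\<lambda>\<tau>. Z (G \<tau>) \<bullet> n (G \<tau>)) has_derivative (\<lambda>h. 0)) (at \<tau>)" if \<tau>: "\<tau> \<in> {s..0}" for \<tau>
    proof -
      define x where "x = G \<tau>"
      define y where "y = P \<tau>"
      have xU1: "x \<in> U1" using GU1[OF \<tau>] by (simp add: x_def)
      have xW2: "x \<in> W2" using xU1 U1W2 by auto
      have x2: "x $ 2 \<le> 0" using G2[OF \<tau>] \<tau> by (simp add: x_def)
      have yV: "y \<in> V" using PV[OF \<tau>] by (simp add: y_def)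
      have gy: "g y = x" by (simp add: x_def y_def G_def)
      have dP: "(P has_derivative (\<lambda>h. h *\<^sub>R e2)) (at \<tau>)"
        unfolding P_def[abs_def] by (auto intro!: derivative_eq_intros)
      have dG: "(G has_derivative (\<lambda>h. g' y (h *\<^sub>R e2))) (at \<tau>)"
        using has_derivative_compose[OF dP dg[OF yV, unfolded y_def]] unfolding G_def[abs_def] y_def by (simp add: o_def)
      have lin_g': "linear (g' y)" using dg[OF yV] has_derivative_linear by blast
      define hv where "hv = g' y e2"
      have gh: "g' y (h *\<^sub>R e2) = h *\<^sub>R hv" for h using linear_scale[OF lin_g'] by (simp add: hv_def)
      have bijx: "bij (D\<Phi> x)" using bij[OF yV] f'a[OF xU1] gy by simp
      have "g' y = inv (D\<Phi> x)" using g'inv[OF yV] f'a[OF xU1] gy by simp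
      then have "D\<Phi> x hv = e2" unfolding hv_def using bijx by (simp add: bij_is_surj surj_f_inv_f)
      then have hvk: "Dn x hv $ k = 0" and hv2: "hv $ 2 = 1"
        using D\<Phi>1[of x hv] D\<Phi>2[of x hv] e2c by auto
      have linx: "linear (Dn x)" using linDn[OF xU1] .
      have Dk: "Dn x e1 $ k \<noteq> 0"
      proof
        assume h0: "Dn x e1 $ k = 0"
        have "D\<Phi> x e1 = 0" using h0 by (simp add: D\<Phi>_def e1c)
        moreover have "D\<Phi> x 0 = 0" using blD\<Phi>[OF xU1] linear_0 bounded_linear.linear by blast
        ultimately have "e1 = 0" using bij_is_inj[OF bijx] by (metis injD)
        then show False using e1c by simp
      qed
      then have Dne: "Dn x e1 \<noteq> 0" by auto
      obtain l where l: "Dn x e2 = l *\<^sub>R Dn x e1"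
        using cross_zero_collinear[OF rank[OF xU1 x2] Dne] by blast
      have "Dn x hv = hv$1 *\<^sub>R Dn x e1 + hv$2 *\<^sub>R Dn x e2"
        using lin2[OF linx, of hv] by (simp add: e1_def e2_def)
      then have Dhv: "Dn x hv = (hv$1 + l * hv$2) *\<^sub>R Dn x e1" using l by (simp add: algebra_simps)
      then have "(hv$1 + l * hv$2) * (Dn x e1 $ k) = 0" using hvk by simp
      then have "hv$1 + l * hv$2 = 0" using Dk by simp
      then have Dhv0: "Dn x hv = 0" using Dhv by simp
      have dnx: "(n has_derivative Dn x) (at x)" using dn[OF xW2 c0[OF xU1]] .
      have dnG: "((\<lambda>\<tau>. n (G \<tau>)) has_derivative (\<lambda>h. Dn x (g' y (h *\<^sub>R e2)))) (at \<tau>)"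
        using has_derivative_compose[OF dG dnx[unfolded x_def]] by (simp add: x_def o_def)
      have dnG0: "(\<lambda>h. Dn x (g' y (h *\<^sub>R e2))) = (\<lambda>h. 0)"
        using gh linear_scale[OF linx] Dhv0 by simp
      have dZG: "((\<lambda>\<tau>. Z (G \<tau>)) has_derivative (\<lambda>h. frechet_derivative Z (at x) (g' y (h *\<^sub>R e2)))) (at \<tau>)"
        using has_derivative_compose[OF dG dZ[OF xW2, unfolded x_def]] by (simp add: x_def o_def)
      have na: "n x \<bullet> a x = 0" "n x \<bullet> b x = 0" by (simp_all add: n_def c_def dot_cross_self)
      have "frechet_derivative Z (at x) hv = hv$1 *\<^sub>R a x + hv$2 *\<^sub>R b x"
        using lin2[OF lin_dZ[OF xW2], of hv] by (simp add: a_eq b_eq e1_def e2_def)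
      moreover have "a x \<bullet> n x = 0" "b x \<bullet> n x = 0" using na by (simp_all add: inner_commute)
      ultimately have Zn: "frechet_derivative Z (at x) hv \<bullet> n x = 0"
        by (simp add: inner_add_left)
      have "((\<lambda>\<tau>. Z (G \<tau>) \<bullet> n (G \<tau>)) has_derivative
           (\<lambda>h. Z (G \<tau>) \<bullet> Dn x (g' y (h *\<^sub>R e2)) + frechet_derivative Z (at x) (g' y (h *\<^sub>R e2)) \<bullet> n (G \<tau>))) (at \<tau>)"
        by (rule has_derivative_inner[OF dZG dnG])
      moreover have "(\<lambda>h. Z (G \<tau>) \<bullet> Dn x (g' y (h *\<^sub>R e2)) + frechet_derivative Z (at x) (g' y (h *\<^sub>R e2)) \<bullet> n (G \<tau>)) = (\<lambda>h. 0)"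
        using dnG0 gh linear_scale[OF lin_dZ[OF xW2]] Zn by (simp add: x_def[symmetric] fun_eq_iff)
      ultimately show ?thesis using dnG dnG0 by simp
    qed
    have s0: "s \<le> 0" using w2 by (simp add: s_def)
    have cv: "convex {s..(0::real)}" by (rule convex_real_interval)
    obtain C1 where C1: "\<forall>\<tau>\<in>{s..0}. n (G \<tau>) = C1"
      using has_derivative_zero_constant[OF cv, of "\<lambda>\<tau>. n (G \<tau>)"] zero has_derivative_at_withinI by blast
    obtain C2 where C2: "\<forall>\<tau>\<in>{s..0}. Z (G \<tau>) \<bullet> n (G \<tau>) = C2"
      using has_derivative_zero_constant[OF cv, of "\<lambda>\<tau>. Z (G \<tau>) \<bullet> n (G \<tau>)"] zero has_derivative_at_withinI by blast
    have sI: "s \<in> {s..0}" and zI: "0 \<in> {s..0}" using s0 by auto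
    have Gs: "G s = w" using hom1[OF wU'] Ps by (simp add: G_def)
    define w0 where "w0 = G 0"
    have w0U': "w0 \<in> U'" using GU'[OF zI] by (simp add: w0_def)
    have w02: "w0 $ 2 = 0" using G2[OF zI] by (simp add: w0_def)
    have w0B0: "w0 \<in> B0" using w0U' U'sub w02 by (auto simp: B0_def)
    have wB0: "w \<in> B0" using wU' U'sub w2 by (auto simp: B0_def)
    have w0W: "w0 \<in> W" using w0B0 B0W by auto
    have wW: "w \<in> W" using wB0 B0W by auto
    have nn: "n w = n w0"
    proof -
      have "n (G s) = C1" "n (G 0) = C1" using C1 sI zI by blast+
      then show ?thesis using Gs by (simp add: w0_def)
    qed
    have zz: "Z w \<bullet> n w = Z w0 \<bullet> n w0"
    proof -
      have "Z (G s) \<bullet> n (G s) = C2" "Z (G 0) \<bullet> n (G 0) = C2" using C2 sI zI by blast+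
      then show ?thesis using Gs by (simp add: w0_def)
    qed
    have bw0: "bpt (w0 $ 1) = w0" using eq_bpt[OF w02] by simp
    have "pi2 (X w, N w) = (- (X w0 \<bullet> N w0), N w0)"
      using XZ[OF wW w2] XZ[OF w0W] w02 NB0[OF wB0] NB0[OF w0B0] nn zz
      by (simp add: pi2_def)
    also have "\<dots> = (- (X (bpt (w0$1)) \<bullet> N (bpt (w0$1))), N (bpt (w0$1)))" using bw0 by simp
    finally show ?thesis unfolding dual_boundary_def using bw0 w0W by (intro rev_image_eqI[of "w0$1"]) auto
  qed
  show ?thesis
  proof (intro exI conjI)
    show "openin (top_of_set {w\<in>W. w$2 \<le> 0}) Vs" by (rule Vs_open)
    show "bpt p0 \<in> Vs" using ppVs by (simp add: pp_def)
    show "pi2 ` legendre_lift X N Vs \<subseteq> dual_boundary X N {t. bpt t \<in> W}"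
      unfolding legendre_lift_def using main by auto
  qed
qed


end
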